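(* For all $a,b\ge0$, $$\left|(a+1)e^{-a}-(b+1)e^{-b}\right|\ge|a-b|\sqrt{ab}\,e^{-\frac{a+b}{2}}.$$ *)

theory Defs
  imports Complex_Main
begin

end

theory Submission
  imports Defs
begin

lemma L1: "exp x + exp (-x) - 2 \<ge> (0::real)"
proof -
  have e: "exp (-x) = 1 / exp x" by (simp add: exp_minus field_simps)
  have p: "exp x > 0" by simp
  have "exp x + 1/exp x - 2 = (exp x - 1)^2 / exp x" using p by (simp add: field_simps power2_eq_square)
  also have "\<dots> \<ge> 0" using p by simp
  finally show ?thesis using e by simp
qed

lemma L2: assumes "(x::real) \<ge> 0" shows "exp x - exp (-x) - 2*x \<ge> 0"
proof -
  have "(\<lambda>x. exp x - exp (-x) - 2*x) 0 \<le> (\<lambda>x. exp x - exp (-x) - 2*x) x"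
  proof (rule DERIV_nonneg_imp_nondecreasing[OF assms], intro allI impI exI conjI)
    fix y :: real
    show "((\<lambda>x. exp x - exp (-x) - 2*x) has_real_derivative exp y + exp (-y) - 2) (at y)"
      by (auto intro!: derivative_eq_intros)
    show "exp y + exp (-y) - 2 \<ge> 0" by (rule L1)
  qed
  then show ?thesis by simp
qed

lemma L3: assumes "(x::real) \<ge> 0" shows "exp x + exp (-x) - 2 - x^2 \<ge> 0"
proof -
  have "(\<lambda>x. exp x + exp (-x) - 2 - x^2) 0 \<le> (\<lambda>x. exp x + exp (-x) - 2 - x^2) x"
  proof (rule DERIV_nonneg_imp_nondecreasing[OF assms], intro allI impI exI conjI)
    fix y :: real
    show "((\<lambda>x. exp x + exp (-x) - 2 - x^2) has_real_derivative exp y - exp (-y) - 2*y) (at y)"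
      by (auto intro!: derivative_eq_intros)
    assume "0 \<le> y" "y \<le> x"
    then show "exp y - exp (-y) - 2*y \<ge> 0" using L2 by auto
  qed
  then show ?thesis by simp
qed

lemma L4: assumes "(x::real) \<ge> 0" shows "(x-1)*exp x - (x+1)*exp (-x) + 2 - x^2 - x^4/4 \<ge> 0"
proof -
  let ?g = "\<lambda>x::real. (x-1)*exp x - (x+1)*exp (-x) + 2 - x^2 - x^4/4"
  have "?g 0 \<le> ?g x"
  proof (rule DERIV_nonneg_imp_nondecreasing[OF assms], intro allI impI exI conjI)
    fix y :: real
    show "(?g has_real_derivative y * (exp y + exp (-y) - 2 - y^2)) (at y)"
      by (auto intro!: derivative_eq_intros simp: algebra_simps power2_eq_square power3_eq_cube)
    assume "0 \<le> y" "y \<le> x"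
    then show "y * (exp y + exp (-y) - 2 - y^2) \<ge> 0" using L3 by auto
  qed
  then show ?thesis by simp
qed

lemma ident: fixes E F t :: real assumes "E*F = 1"
  shows "((E-F)*t)^2 - ((E-F) - t*(E+F))^2 - 4*t^4 = (2*t-1)*E^2 - (2*t+1)*F^2 + 2 - 4*t^2 - 4*t^4"
proof -
  have "((E-F)*t)^2 - ((E-F) - t*(E+F))^2 = (E*(2*t-1) + F) * (E - F*(2*t+1))"
    by (simp add: algebra_simps power2_eq_square)
  also have "\<dots> = (2*t-1)*E^2 - (2*t-1)*(2*t+1)*(E*F) + E*F - (2*t+1)*F^2"
    by (simp add: algebra_simps power2_eq_square)
  finally show ?thesis using assms by (simp add: algebra_simps power2_eq_square)
qed

lemma core: fixes a b :: real assumes "0 \<le> b" "b \<le> a"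
  shows "(b+1)*exp(-b) - (a+1)*exp(-a) \<ge> (a-b)*sqrt(a*b)*exp(-((a+b)/2))"
proof -
  define t where "t = (a-b)/2"
  define m where "m = (a+b)/2"
  define E where "E = exp t"
  define F where "F = exp (-t)"
  have t0: "t \<ge> 0" and mt: "m \<ge> t" using assms by (auto simp: t_def m_def)
  have EF: "E*F = 1" by (simp add: E_def F_def flip: exp_add)
  have Fpos: "F > 0" by (simp add: F_def)
  have eb: "exp(-b) = exp(-m) * E" by (simp add: E_def m_def t_def flip: exp_add) (simp add: field_simps)
  have ea: "exp(-a) = exp(-m) * F" by (simp add: F_def m_def t_def flip: exp_add) (simp add: field_simps)
  have em: "exp(-((a+b)/2)) = exp(-m)" by (simp add: m_def)
  have ab: "a*b = m^2 - t^2" by (simp add: m_def t_def power2_eq_square field_simps)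
  have amb: "a - b = 2*t" by (simp add: t_def)
  have bb: "b = m - t" and aa: "a = m + t" by (simp_all add: m_def t_def field_simps)
  define P where "P = (m-t+1)*E - (m+t+1)*F"
  have lhs: "(b+1)*exp(-b) - (a+1)*exp(-a) = exp(-m) * P"
    by (simp only: eb ea P_def) (simp add: bb aa algebra_simps)
  have K1: "E*E \<ge> 1 + 2*t" using exp_ge_add_one_self[of "2*t"] by (simp add: E_def flip: exp_add)
  have K3: "E - F \<ge> 2*t" using L2[OF t0] by (simp add: E_def F_def)
  have E2: "E^2 = exp (2*t)" by (simp add: E_def power2_eq_square flip: exp_add)
  have F2: "F^2 = exp (-(2*t))" by (simp add: F_def power2_eq_square flip: exp_add)
  have L4': "(2*t-1)*exp (2*t) - (2*t+1)*exp (-(2*t)) + 2 - (2*t)^2 - (2*t)^4/4 \<ge> 0"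
    using L4[of "2*t"] t0 by simp
  have K2: "(2*t-1)*E^2 - (2*t+1)*F^2 + 2 - 4*t^2 - 4*t^4 \<ge> 0"
    using L4' unfolding E2 F2 by (simp add: power_mult_distrib)
  define s where "s = E - F"
  define d where "d = s - t*(E+F)"
  have Pd: "P = m*s + d" by (simp add: P_def s_def d_def algebra_simps)
  have "E - (1+2*t)*F = F*(E*E - (1+2*t))" using EF by (simp add: algebra_simps)
  also have "\<dots> \<ge> 0" using Fpos K1 by simp
  finally have k1': "E - (1+2*t)*F \<ge> 0" .
  have "(m-t)*(E-F) \<ge> 0" using mt K3 t0 by simp
  then have P0: "P \<ge> 0" using k1' by (simp add: P_def algebra_simps)
  define K where "K = (s*t)^2 - d^2 - 4*t^4"
  have K0: "K \<ge> 0" using K2 ident[OF EF, of t] by (simp add: K_def s_def d_def)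
  define \<alpha> where "\<alpha> = s^2 - 4*t^2"
  have "(2*t)^2 \<le> s^2" using K3 t0 unfolding s_def by (intro power_mono) auto
  then have al0: "\<alpha> \<ge> 0" unfolding \<alpha>_def by (simp add: power_mult_distrib)
  define Q where "Q = P^2 - 4*t^2*(m^2-t^2)"
  have aQ: "\<alpha> * Q = (\<alpha>*m + s*d)^2 + 4*t^2*K"
    by (simp add: \<alpha>_def Q_def K_def Pd power2_eq_square power4_eq_xxxx algebra_simps)
  have Q0: "Q \<ge> 0"
  proof (cases "\<alpha> = 0")
    case True
    then have "(s*d)^2 + 4*t^2*K = 0" using aQ by simp
    moreover have "4*t^2*K \<ge> 0" using K0 by simp
    ultimately have "(s*d)^2 = 0" by (metis add_nonneg_eq_0_iff zero_le_power2)
    then have "s*d = 0" by simp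
    have "Q = 2*m*(s*d) + d^2 + 4*t^2*t^2 + (s^2 - 4*t^2)*m^2"
      by (simp add: Q_def Pd power2_eq_square algebra_simps)
    also have "\<dots> = d^2 + 4*t^2*t^2" using True \<open>s*d = 0\<close> by (simp add: \<alpha>_def)
    finally show ?thesis by simp
  next
    case False
    then have "\<alpha> > 0" using al0 by simp
    moreover have "\<alpha> * Q \<ge> 0" using aQ K0 by simp
    ultimately show ?thesis by (simp add: zero_le_mult_iff)
  qed
  have "2*t*sqrt(a*b) = sqrt((2*t)^2*(a*b))" using t0 by (simp add: real_sqrt_mult)
  also have "\<dots> \<le> sqrt (P^2)" using Q0 by (intro real_sqrt_le_mono) (simp add: Q_def ab algebra_simps)
  also have "\<dots> = P" using P0 by simp
  finally have "2*t*sqrt(a*b) \<le> P" .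
  then show ?thesis by (simp add: lhs amb em mult.commute mult_left_mono)
qed
theorem mainTheorem10:
  fixes a b :: real
  assumes "a \<ge> 0" and "b \<ge> 0"
  shows "\<bar>(a + 1) * exp (- a) - (b + 1) * exp (- b)\<bar> \<ge> \<bar>a - b\<bar> * sqrt (a * b) * exp (- ((a + b) / 2))"
proof (cases "b \<le> a")
  case True
  have "\<bar>a - b\<bar> * sqrt (a * b) * exp (- ((a + b) / 2)) \<le> (b+1)*exp(-b) - (a+1)*exp(-a)"
    using core[OF assms(2) True] True by simp
  then show ?thesis by linarith
next
  case False
  then have "a \<le> b" by simp
  from core[OF assms(1) this]
  have "\<bar>a - b\<bar> * sqrt (a * b) * exp (- ((a + b) / 2)) \<le> (a+1)*exp(-a) - (b+1)*exp(-b)"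
    using False by (simp add: mult.commute add.commute)
  then show ?thesis by linarith
qed

end
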